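(* Let $\lambda_1,\lambda_2,\lambda_1',\lambda_2',\sigma_1,\sigma_2,\sigma_1',\sigma_2'\in\mathbb{C}^*$ and $\eta_1,\eta_2,\eta_1',\eta_2'\in\mathbb{C}$ with $\lambda_1\neq\lambda_2$ and $\lambda_1'\neq\lambda_2'$. Then the irreducible $\mathcal{G}$-modules $\Omega(\lambda_1,\eta_1,\sigma_1,0)\otimes\Omega(\lambda_2,\eta_2,0,\sigma_2)$ and $\Omega(\lambda_1',\eta_1',\sigma_1',0)\otimes\Omega(\lambda_2',\eta_2',0,\sigma_2')$ are isomorphic if and only if $(\lambda_1,\eta_1,\sigma_1)=(\lambda_1',\eta_1',\sigma_1')$ and $(\lambda_2,\eta_2,\sigma_2)=(\lambda_2',\eta_2',\sigma_2')$.
   Context: The planar Galilean conformal algebra $\mathcal{G}$ is the complex Lie algebra with basis $\{L_m,H_m,I_m,J_m\mid m\in\mathbb{Z}\}$ and brackets $[L_m,L_n]=(n-m)L_{m+n}$, $[L_m,H_n]=nH_{m+n}$, $[L_m,I_n]=(n-m)I_{m+n}$, $[L_m,J_n]=(n-m)J_{m+n}$, $[H_m,I_n]=I_{m+n}$, $[H_m,J_n]=-J_{m+n}$, and $[H_m,H_n]=[I_m,I_n]=[J_m,J_n]=[I_m,J_n]=0$ for all $m,n\in\mathbb{Z}$. For $\lambda,\sigma\in\mathbb{C}^*$, $\eta\in\mathbb{C}$, the module $\Omega(\lambda,\eta,\sigma,0)$ is $\mathbb{C}[X,Y]$ with $L_m f(X,Y)=\lambda^m(Y-mX+m\eta)f(X,Y-m)$,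 $H_m f(X,Y)=\lambda^m X f(X,Y-m)$, $I_m f(X,Y)=\lambda^m\sigma f(X-1,Y-m)$, $J_m f(X,Y)=0$. The module $\Omega(\lambda,\eta,0,\sigma)$ is $\mathbb{C}[S,T]$ with $L_m f(S,T)=\lambda^m(T+mS+m\eta)f(S,T-m)$, $H_m f(S,T)=\lambda^m S f(S,T-m)$, $I_m f(S,T)=0$, $J_m f(S,T)=\lambda^m\sigma f(S+1,T-m)$. The tensor product of $\mathcal{G}$-modules has action $x(v\otimes w)=xv\otimes w+v\otimes xw$. (When $\lambda_1\neq\lambda_2$ these tensor products are irreducible.) *)

theory Defs
  imports "HOL-Computational_Algebra.Polynomial"
begin

text \<open>The polynomial ring C[X,Y,S,T], realised as nested univariate polynomials:
  innermost variable X, then Y, then S, outermost variable T.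
  The tensor product C[X,Y] (x) C[S,T] is identified with C[X,Y,S,T] via f (x) g |-> f g.\<close>

type_synonym mpoly4 = "complex poly poly poly poly"

definition cst :: "complex \<Rightarrow> mpoly4" where
  "cst c = [:[:[:[:c:]:]:]:]"

definition varX :: mpoly4 where "varX = [:[:[:[:0, 1:]:]:]:]"
definition varY :: mpoly4 where "varY = [:[:[:0, 1:]:]:]"
definition varS :: mpoly4 where "varS = [:[:0, 1:]:]"
definition varT :: mpoly4 where "varT = [:0, 1:]"

definition shiftX :: "complex \<Rightarrow> mpoly4 \<Rightarrow> mpoly4" where
  "shiftX a p = map_poly (map_poly (map_poly (\<lambda>q. pcompose q [:a, 1:]))) p"
definition shiftY :: "complex \<Rightarrow> mpoly4 \<Rightarrow> mpoly4" where
  "shiftY a p = map_poly (map_poly (\<lambda>q. pcompose q [:[:a:], 1:])) p"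
definition shiftS :: "complex \<Rightarrow> mpoly4 \<Rightarrow> mpoly4" where
  "shiftS a p = map_poly (\<lambda>q. pcompose q [:[:[:a:]:], 1:]) p"
definition shiftT :: "complex \<Rightarrow> mpoly4 \<Rightarrow> mpoly4" where
  "shiftT a p = pcompose p [:[:[:[:a:]:]:], 1:]"

datatype gca_basis = L int | H int | I int | J int

text \<open>Action of the basis on Omega(lam,eta,sig,0) = C[X,Y], acting on the X,Y variables.\<close>
fun omega_I_act :: "complex \<Rightarrow> complex \<Rightarrow> complex \<Rightarrow> gca_basis \<Rightarrow> mpoly4 \<Rightarrow> mpoly4" where
  "omega_I_act lam eta sig (L m) f =
     cst (lam powi m) * (varY - cst (of_int m) * varX + cst (of_int m * eta)) * shiftY (- of_int m) f"
| "omega_I_act lam eta sig (H m) f = cst (lam powi m) * varX * shiftY (- of_int m) f"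
| "omega_I_act lam eta sig (I m) f = cst (lam powi m * sig) * shiftX (-1) (shiftY (- of_int m) f)"
| "omega_I_act lam eta sig (J m) f = 0"

text \<open>Action of the basis on Omega(lam,eta,0,sig) = C[S,T], acting on the S,T variables.\<close>
fun omega_J_act :: "complex \<Rightarrow> complex \<Rightarrow> complex \<Rightarrow> gca_basis \<Rightarrow> mpoly4 \<Rightarrow> mpoly4" where
  "omega_J_act lam eta sig (L m) f =
     cst (lam powi m) * (varT + cst (of_int m) * varS + cst (of_int m * eta)) * shiftT (- of_int m) f"
| "omega_J_act lam eta sig (H m) f = cst (lam powi m) * varS * shiftT (- of_int m) f"
| "omega_J_act lam eta sig (I m) f = 0"
| "omega_J_act lam eta sig (J m) f = cst (lam powi m * sig) * shiftS 1 (shiftT (- of_int m) f)"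

text \<open>Tensor product Omega(l1,e1,s1,0) (x) Omega(l2,e2,0,s2): x(v (x) w) = xv (x) w + v (x) xw.\<close>
definition tensor_act ::
  "complex \<Rightarrow> complex \<Rightarrow> complex \<Rightarrow> complex \<Rightarrow> complex \<Rightarrow> complex \<Rightarrow> gca_basis \<Rightarrow> mpoly4 \<Rightarrow> mpoly4" where
  "tensor_act l1 e1 s1 l2 e2 s2 x f = omega_I_act l1 e1 s1 x f + omega_J_act l2 e2 s2 x f"

text \<open>Isomorphism of G-modules on the same underlying vector space: a complex-linear
  bijection intertwining the actions of all basis elements (hence of all of G).\<close>
definition module_iso :: "(gca_basis \<Rightarrow> mpoly4 \<Rightarrow> mpoly4) \<Rightarrow> (gca_basis \<Rightarrow> mpoly4 \<Rightarrow> mpoly4) \<Rightarrow> bool" where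
  "module_iso \<rho> \<rho>' \<longleftrightarrow> (\<exists>\<phi>. bij \<phi> \<and>
      (\<forall>f g. \<phi> (f + g) = \<phi> f + \<phi> g) \<and>
      (\<forall>c f. \<phi> (cst c * f) = cst c * \<phi> f) \<and>
      (\<forall>x f. \<phi> (\<rho> x f) = \<rho>' x (\<phi> f)))"

end

theory Submission
  imports Defs
begin

lemma const_mult: "[:a:] * p = smult a p" by simp

lemma mp_diff: assumes "F 0 = 0" "\<And>x y. F (x - y) = F x - F y"
  shows "map_poly F (p - q) = map_poly F p - map_poly F q"
  by (intro poly_eqI) (simp add: coeff_map_poly assms)

lemma mp_smult: assumes "F 0 = 0" "\<And>x. F (k * x) = k * F x"
  shows "map_poly F (smult k p) = smult k (map_poly F p)"
  by (intro poly_eqI) (simp add: coeff_map_poly assms)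

lemma mp_const: assumes "F 0 = 0" shows "map_poly F [:k:] = [:F k:]"
  by (simp add: map_poly_pCons assms)

lemma mp_inj: assumes "F 0 = 0" "\<And>x. F x = 0 \<Longrightarrow> x = 0" "map_poly F p = 0"
  shows "p = 0"
proof (intro poly_eqI)
  fix i have "F (coeff p i) = 0" using assms(3) by (metis assms(1) coeff_0 coeff_map_poly)
  then show "coeff p i = coeff 0 i" using assms(2) by simp
qed

lemma mp_LC: assumes "F 0 = 0" "\<And>x. e' * F x = e * x \<Longrightarrow> x \<noteq> 0 \<Longrightarrow> e' = e"
  "[:e':] * map_poly F p = [:e:] * p" "p \<noteq> 0"
  shows "e' = e"
proof -
  obtain i where i: "coeff p i \<noteq> 0" using assms(4) by (metis coeff_0 poly_eqI)
  have "coeff ([:e':] * map_poly F p) i = coeff ([:e:] * p) i" using assms(3) by simp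
  then have "e' * F (coeff p i) = e * coeff p i" by (simp add: coeff_map_poly assms(1))
  then show ?thesis using assms(2) i by blast
qed

lemma base_LC: fixes p :: "'a::idom poly"
  assumes "[:e':] * pcompose p [:a,1:] = [:e:] * p" "p \<noteq> 0"
  shows "e' = e"
proof -
  have "lead_coeff ([:e':] * pcompose p [:a,1:]) = lead_coeff ([:e:] * p)" using assms(1) by simp
  moreover have "lead_coeff ([:e':] * pcompose p [:a,1:]) = e' * lead_coeff p"
    by (simp only: lead_coeff_mult lead_coeff_comp) (simp add: lead_coeff_comp)
  moreover have "lead_coeff ([:e:] * p) = e * lead_coeff p"
    by (simp only: lead_coeff_mult) simp
  ultimately have "e' * lead_coeff p = e * lead_coeff p" by simp
  then show ?thesis using assms(2) by simp
qed

lemma base_inj: fixes p :: "'a::idom poly"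
  assumes "pcompose p [:a,1:] = 0" shows "p = 0"
  using pcompose_eq_0[OF assms] by simp

lemma base_fix: fixes p :: "'a::{idom,ring_char_0} poly"
  assumes "pcompose p [:a,1:] = p" "a \<noteq> 0"
  shows "p = [:coeff p 0:]"
proof -
  have step: "poly p (a + x) = poly p x" for x
    using arg_cong[OF assms(1), of "\<lambda>q. poly q x"] by (simp add: poly_pcompose)
  have all: "poly p (of_nat n * a) = poly p 0" for n
  proof (induction n)
    case (Suc n) then show ?case using step[of "of_nat n * a"] by (simp add: algebra_simps)
  qed simp
  define q where "q = p - [:poly p 0:]"
  have sub: "range (\<lambda>n. of_nat n * a) \<subseteq> {x. poly q x = 0}"
    using all by (auto simp: q_def)
  have "inj (\<lambda>n::nat. of_nat n * a)"
    using assms(2) by (intro injI) simp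
  then have "infinite (range (\<lambda>n::nat. of_nat n * a))"
    using range_inj_infinite by blast
  then have "infinite {x. poly q x = 0}" using sub finite_subset by blast
  then have "q = 0" using poly_roots_finite by blast
  then show ?thesis by (simp add: q_def poly_0_coeff_0)
qed

lemma mp_LC2: assumes "F 0 = 0" "\<And>x. smult k' (F x) = smult k x \<Longrightarrow> x \<noteq> 0 \<Longrightarrow> k' = k"
  "smult [:k':] (map_poly F p) = smult [:k:] p" "p \<noteq> 0"
  shows "k' = k"
  using mp_LC[of F "[:k':]" "[:k:]" p] assms by simp

lemma base_LC2: fixes p :: "'a::idom poly"
  assumes "smult k' (pcompose p [:a,1:]) = smult k p" "p \<noteq> 0"
  shows "k' = k"
  using base_LC[of k' p a k] assms by simp

lemma pc0: "pcompose 0 q = 0" by simp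

lemma shiftX_cst: "shiftX a (cst c) = cst c"
  by (simp add: shiftX_def cst_def map_poly_pCons)
lemma shiftY_cst: "shiftY a (cst c) = cst c"
  by (simp add: shiftY_def cst_def map_poly_pCons)
lemma shiftS_cst: "shiftS a (cst c) = cst c"
  by (simp add: shiftS_def cst_def map_poly_pCons)
lemma shiftT_cst: "shiftT a (cst c) = cst c"
  by (simp add: shiftT_def cst_def)

lemma shiftY_0: "shiftY 0 f = f"
  by (simp add: shiftY_def map_poly_idI)
lemma shiftT_0: "shiftT 0 f = f"
  by (simp add: shiftT_def)

lemma shiftX_diff: "shiftX a (f - g) = shiftX a f - shiftX a g"
  unfolding shiftX_def
  by (intro mp_diff) (simp_all add: mp_diff pcompose_diff)
lemma shiftS_diff: "shiftS a (f - g) = shiftS a f - shiftS a g"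
  unfolding shiftS_def
  by (intro mp_diff) (simp_all add: pcompose_diff)

lemma shiftX_cmult: "shiftX a (cst c * f) = cst c * shiftX a f"
  unfolding shiftX_def cst_def const_mult
  by (intro mp_smult) (simp_all add: mp_smult const_mult pcompose_smult)
lemma shiftS_cmult: "shiftS a (cst c * f) = cst c * shiftS a f"
  unfolding shiftS_def cst_def const_mult
  by (intro mp_smult) (simp_all add: const_mult pcompose_smult)

lemma shiftX_eq0: "shiftX a f = 0 \<Longrightarrow> f = 0"
  unfolding shiftX_def
  by (erule mp_inj[rotated 2]) (auto elim!: mp_inj[rotated 2] base_inj)
lemma shiftS_eq0: "shiftS a f = 0 \<Longrightarrow> f = 0"
  unfolding shiftS_def
  by (erule mp_inj[rotated 2]) (auto elim!: base_inj)

lemma LC_X: "cst c' * shiftX a g = cst c * g \<Longrightarrow> g \<noteq> 0 \<Longrightarrow> c' = c"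
  unfolding shiftX_def cst_def const_mult
  apply (drule mp_LC2[rotated 2])
  apply simp_all
  apply (drule mp_LC2[rotated 2]) apply simp_all
  apply (drule mp_LC2[rotated 2]) apply simp_all
  apply (drule base_LC2) apply simp_all
  done
lemma LC_Y: "cst c' * shiftY a g = cst c * g \<Longrightarrow> g \<noteq> 0 \<Longrightarrow> c' = c"
  unfolding shiftY_def cst_def const_mult
  apply (drule mp_LC2[rotated 2])
  apply simp_all
  apply (drule mp_LC2[rotated 2]) apply simp_all
  apply (drule base_LC2) apply simp_all
  done
lemma LC_S: "cst c' * shiftS a g = cst c * g \<Longrightarrow> g \<noteq> 0 \<Longrightarrow> c' = c"
  unfolding shiftS_def cst_def const_mult
  apply (drule mp_LC2[rotated 2])
  apply simp_all
  apply (drule base_LC2) apply simp_all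
  done
lemma LC_T: "cst c' * shiftT a g = cst c * g \<Longrightarrow> g \<noteq> 0 \<Longrightarrow> c' = c"
  unfolding shiftT_def cst_def const_mult
  apply (drule base_LC2) apply simp_all
  done

lemma fix_const:
  assumes x: "shiftX a g = g" and y: "shiftY b g = g" and s: "shiftS c g = g"
    and t: "shiftT d g = g" and nz: "a \<noteq> 0" "b \<noteq> 0" "c \<noteq> 0" "d \<noteq> 0"
  shows "\<exists>k. g = cst k"
proof -
  have "g = [:coeff g 0:]"
    using t nz by (intro base_fix[of _ "[:[:[:d:]:]:]"]) (simp_all add: shiftT_def pCons_eq_0_iff)
  then obtain g0 where g0: "g = [:g0:]" by blast
  have "pcompose g0 [:[:[:c:]:], 1:] = g0"
    using s unfolding g0 shiftS_def by (simp add: map_poly_pCons)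
  moreover have "([:[:c:]:] :: complex poly poly) \<noteq> 0" using nz by simp
  ultimately have "g0 = [:coeff g0 0:]" by (rule base_fix)
  then obtain g1 where g1: "g0 = [:g1:]" by blast
  have "pcompose g1 [:[:b:], 1:] = g1"
    using y unfolding g0 g1 shiftY_def by (simp add: map_poly_pCons)
  moreover have "([:b:] :: complex poly) \<noteq> 0" using nz by simp
  ultimately have "g1 = [:coeff g1 0:]" by (rule base_fix)
  then obtain g2 where g2: "g1 = [:g2:]" by blast
  have "pcompose g2 [:a, 1:] = g2"
    using x unfolding g0 g1 g2 shiftX_def by (simp add: map_poly_pCons)
  then have "g2 = [:coeff g2 0:]" using nz(1) by (rule base_fix)
  then show ?thesis unfolding g0 g1 g2 cst_def by metis
qed

lemma cst_add: "cst (a + b) = cst a + cst b" by (simp add: cst_def)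
lemma cst_diff: "cst (a - b) = cst a - cst b" by (simp add: cst_def)
lemma cst_mult: "cst (a * b) = cst a * cst b" by (simp add: cst_def)
lemma cst_1: "cst 1 = 1" by (simp add: cst_def one_pCons)
lemma cst_0: "cst 0 = 0" by (simp add: cst_def)
lemma cst_eq: "cst a = cst b \<longleftrightarrow> a = b" by (simp add: cst_def)
lemma cst_nz: "cst a = 0 \<longleftrightarrow> a = 0" by (simp add: cst_def)

lemma cst_uminus: "cst (- a) = - cst a" by (simp add: cst_def)
lemma cst_power: "cst (a ^ n) = cst a ^ n"
  by (induction n) (simp_all add: cst_mult cst_1)
lemma cst_2: "cst 2 = 2"
  using cst_add[of 1 1] by (simp add: cst_1 one_add_one)

lemma shift_one: "shiftX a 1 = 1" "shiftY a 1 = 1" "shiftS a 1 = 1" "shiftT a 1 = 1"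
  using shiftX_cst[of a 1] shiftY_cst[of a 1] shiftS_cst[of a 1] shiftT_cst[of a 1]
  by (simp_all add: cst_1)

lemma act_cst: "tensor_act l1 e1 s1 l2 e2 s2 x (cst k) = cst k * tensor_act l1 e1 s1 l2 e2 s2 x 1"
  by (cases x) (simp_all add: tensor_act_def shiftX_cst shiftY_cst shiftS_cst shiftT_cst shift_one algebra_simps)

lemma act_L1: "tensor_act l1 e1 s1 l2 e2 s2 (L m) 1 =
   cst (l1 powi m) * (varY - cst (of_int m) * varX + cst (of_int m * e1)) +
   cst (l2 powi m) * (varT + cst (of_int m) * varS + cst (of_int m * e2))"
  by (simp add: tensor_act_def shift_one)
lemma act_H1: "tensor_act l1 e1 s1 l2 e2 s2 (H m) 1 =
   cst (l1 powi m) * varX + cst (l2 powi m) * varS"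
  by (simp add: tensor_act_def shift_one)

lemma ident1:
  assumes "l1 \<noteq> 0" "l2 \<noteq> 0"
  shows "tensor_act l1 e1 s1 l2 e2 s2 (L 1) 1 - cst (l1 + l2) * tensor_act l1 e1 s1 l2 e2 s2 (L 0) 1
    + cst (l1 * l2) * tensor_act l1 e1 s1 l2 e2 s2 (L (-1)) 1 + cst (l1 - l2) * tensor_act l1 e1 s1 l2 e2 s2 (H 0) 1
    = cst ((l1 - l2) * (e1 - e2))"
proof -
  have u1: "cst l1 * cst (inverse l1) = 1" using assms by (simp add: cst_mult[symmetric] cst_1)
  have u2: "cst l2 * cst (inverse l2) = 1" using assms by (simp add: cst_mult[symmetric] cst_1)
  show ?thesis
    unfolding act_L1 act_H1
    apply (simp add: cst_add cst_diff cst_mult cst_1 cst_0 power_int_minus cst_uminus)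
    using u1 u2 by algebra
qed

lemma ident2:
  shows "tensor_act l1 e1 s1 l2 e2 s2 (L 2) 1 - cst (l1 + l2) * tensor_act l1 e1 s1 l2 e2 s2 (L 1) 1
    + cst (l1 * l2) * tensor_act l1 e1 s1 l2 e2 s2 (L 0) 1 + cst (l1 - l2) * tensor_act l1 e1 s1 l2 e2 s2 (H 1) 1
    = cst ((l1 - l2) * (l1 * e1 - l2 * e2))"
  unfolding act_L1 act_H1
  apply (simp add: cst_add cst_diff cst_mult cst_1 cst_0 cst_power cst_2)
  by algebra

theorem theorem3p5:
  fixes l1 l2 l1' l2' s1 s2 s1' s2' e1 e2 e1' e2' :: complex
  assumes "l1 \<noteq> 0" "l2 \<noteq> 0" "l1' \<noteq> 0" "l2' \<noteq> 0"
    and "s1 \<noteq> 0" "s2 \<noteq> 0" "s1' \<noteq> 0" "s2' \<noteq> 0"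
    and "l1 \<noteq> l2" "l1' \<noteq> l2'"
  shows "module_iso (tensor_act l1 e1 s1 l2 e2 s2) (tensor_act l1' e1' s1' l2' e2' s2')
    \<longleftrightarrow> (l1, e1, s1) = (l1', e1', s1') \<and> (l2, e2, s2) = (l2', e2', s2')"
proof
  assume "(l1, e1, s1) = (l1', e1', s1') \<and> (l2, e2, s2) = (l2', e2', s2')"
  then show "module_iso (tensor_act l1 e1 s1 l2 e2 s2) (tensor_act l1' e1' s1' l2' e2' s2')"
    unfolding module_iso_def by (intro exI[of _ id]) auto
next
  let ?r = "tensor_act l1 e1 s1 l2 e2 s2"
  let ?r' = "tensor_act l1' e1' s1' l2' e2' s2'"
  assume "module_iso ?r ?r'"
  then obtain \<phi> where bij: "bij \<phi>" and add: "\<And>f g. \<phi> (f + g) = \<phi> f + \<phi> g"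
    and hom: "\<And>c f. \<phi> (cst c * f) = cst c * \<phi> f"
    and int: "\<And>x f. \<phi> (?r x f) = ?r' x (\<phi> f)"
    unfolding module_iso_def by blast
  have phi0: "\<phi> 0 = 0" using add[of 0 0] by simp
  have diff: "\<phi> (f - g) = \<phi> f - \<phi> g" for f g
    using add[of "f - g" g] by (simp add: algebra_simps)
  define g where "g = \<phi> 1"
  have gnz: "g \<noteq> 0"
  proof
    assume "g = 0"
    then have "\<phi> 1 = \<phi> 0" using phi0 g_def by simp
    then show False using bij_is_inj[OF bij] by (metis inj_eq one_neq_zero)
  qed
  have phic: "\<phi> (cst c) = cst c * g" for c
    using hom[of c 1] by (simp add: g_def)
  have rI: "?r (I m) 1 = cst (l1 powi m * s1)" for m
    by (simp add: tensor_act_def shift_one)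
  have rJ: "?r (J m) 1 = cst (l2 powi m * s2)" for m
    by (simp add: tensor_act_def shift_one)
  have eI: "?r' (I m) g = cst (l1 powi m * s1) * g" for m
    using int[of "I m" 1] rI[of m] phic g_def by simp
  have eJ: "?r' (J m) g = cst (l2 powi m * s2) * g" for m
    using int[of "J m" 1] rJ[of m] phic g_def by simp
  have I0: "cst s1' * shiftX (-1) g = cst s1 * g"
    using eI[of 0] by (simp add: tensor_act_def shiftY_0)
  then have s1eq: "s1' = s1" using LC_X gnz by blast
  have gX: "shiftX (-1) g = g" using I0 s1eq assms(5) by (simp add: cst_nz)
  have I1: "cst (l1' * s1') * shiftX (-1) (shiftY (-1) g) = cst (l1 * s1) * shiftX (-1) g"
    using eI[of 1] gX by (simp add: tensor_act_def)
  then have "shiftX (-1) (cst (l1' * s1') * shiftY (-1) g - cst (l1 * s1) * g) = 0"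
    by (simp add: shiftX_diff shiftX_cmult)
  then have I1': "cst (l1' * s1') * shiftY (-1) g = cst (l1 * s1) * g"
    using shiftX_eq0 by fastforce
  then have "l1' * s1' = l1 * s1" using LC_Y gnz by blast
  then have l1eq: "l1' = l1" using s1eq assms(5) by simp
  have gY: "shiftY (-1) g = g" using I1' s1eq l1eq assms(1,5) by (simp add: cst_nz)
  have J0: "cst s2' * shiftS 1 g = cst s2 * g"
    using eJ[of 0] by (simp add: tensor_act_def shiftT_0)
  then have s2eq: "s2' = s2" using LC_S gnz by blast
  have gS: "shiftS 1 g = g" using J0 s2eq assms(6) by (simp add: cst_nz)
  have J1: "cst (l2' * s2') * shiftS 1 (shiftT (-1) g) = cst (l2 * s2) * shiftS 1 g"
    using eJ[of 1] gS by (simp add: tensor_act_def)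
  then have "shiftS 1 (cst (l2' * s2') * shiftT (-1) g - cst (l2 * s2) * g) = 0"
    by (simp add: shiftS_diff shiftS_cmult)
  then have J1': "cst (l2' * s2') * shiftT (-1) g = cst (l2 * s2) * g"
    using shiftS_eq0 by fastforce
  then have "l2' * s2' = l2 * s2" using LC_T gnz by blast
  then have l2eq: "l2' = l2" using s2eq assms(6) by simp
  have gT: "shiftT (-1) g = g" using J1' s2eq l2eq assms(2,6) by (simp add: cst_nz)
  obtain k where gk: "g = cst k" using fix_const[OF gX gY gS gT] by auto
  have knz: "k \<noteq> 0" using gnz gk cst_0 by metis
  have phir: "\<phi> (?r x 1) = cst k * ?r' x 1" for x
    using int[of x 1] g_def gk act_cst by metis
  have key: "K = K'" if "a1 - cst u1 * a2 + cst u2 * a3 + cst u3 * a4 = cst K"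
    and "\<phi> a1 = cst k * b1" "\<phi> a2 = cst k * b2" "\<phi> a3 = cst k * b3" "\<phi> a4 = cst k * b4"
    and "b1 - cst u1 * b2 + cst u2 * b3 + cst u3 * b4 = cst K'" for a1 a2 a3 a4 b1 b2 b3 b4 u1 u2 u3 K K'
  proof -
    have "\<phi> (a1 - cst u1 * a2 + cst u2 * a3 + cst u3 * a4) = cst k * (b1 - cst u1 * b2 + cst u2 * b3 + cst u3 * b4)"
    proof -
      have "\<phi> (a1 - cst u1 * a2 + cst u2 * a3 + cst u3 * a4) = \<phi> a1 - cst u1 * \<phi> a2 + cst u2 * \<phi> a3 + cst u3 * \<phi> a4"
        by (simp only: add diff hom)
      then show ?thesis using that(2-5) by (simp add: algebra_simps)
    qed
    then have "cst K * cst k = cst k * cst K'" using that(1,6) phic gk by simp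
    then have "cst (K * k) = cst (k * K')" by (simp add: cst_mult)
    then show ?thesis using knz by (simp add: cst_eq)
  qed
  have k1: "(l1 - l2) * (e1 - e2) = (l1 - l2) * (e1' - e2')"
    by (rule key[OF ident1[OF assms(1,2)] phir phir phir phir])
       (use ident1[OF assms(1,2), of e1' s1' e2' s2'] l1eq l2eq in simp)
  have k2: "(l1 - l2) * (l1 * e1 - l2 * e2) = (l1 - l2) * (l1 * e1' - l2 * e2')"
    by (rule key[OF ident2 phir phir phir phir])
       (use ident2[of l1 e1' s1' l2 e2' s2'] l1eq l2eq in simp)
  have "e1 - e2 = e1' - e2'" using k1 assms(9) by simp
  moreover have "l1 * e1 - l2 * e2 = l1 * e1' - l2 * e2'" using k2 assms(9) by simp
  moreover have "(l1 - l2) * e1 = (l1 * e1 - l2 * e2) - l2 * (e1 - e2)" for e1 e2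
    by (simp add: algebra_simps)
  ultimately have "(l1 - l2) * e1 = (l1 - l2) * e1'" by metis
  then have e1eq: "e1 = e1'" using assms(9) by simp
  then have "e2 = e2'" using \<open>e1 - e2 = e1' - e2'\<close> by simp
  then show "(l1, e1, s1) = (l1', e1', s1') \<and> (l2, e2, s2) = (l2', e2', s2')"
    using e1eq l1eq l2eq s1eq s2eq by simp
qed

end
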